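(* Let $G$ be a digraph and $v\to w\in E(G)$. Then $v\to w$ is disimplicial in $G$ if and only if $(\mathrm{repr}(\mathrm{out}(v)),\mathrm{repr}(\mathrm{in}(w)))$ is a vertex of $\mathrm{Join}(\mathrm{Repr}(\mathrm{Split}(G)))$ and this vertex is transitive there.
   Context: A digraph is a finite vertex set $V$ with arc set $E\subseteq V\times V$. $N^+(v),N^-(v)$ denote out-/in-neighborhoods, $N(v)=N^+(v)\cup N^-(v)$, $d(v)=|N(v)|$. Source: $N^-(v)=\emptyset$; sink: $N^+(v)=\emptyset$; ST graph: every vertex is a source or a sink. An arc $v\to w$ is disimplicial if $x\to y$ is an arc for all $x\in N^-(w)$, $y\in N^+(v)$; a vertex $u$ is transitive if $x\to y$ is an arc for all $x\in N^-(u)$, $y\in N^+(u)$. $\mathrm{Split}(G)$ is the ST graph with a vertex $\mathrm{out}(v)$ for each non-sink $v$ of $G$ and a vertex $\mathrm{in}(w)$ for each non-source $w$ (all distinct), $\mathrm{out}(v)\to\mathrm{in}(w)$ an arc iff $v\to w\in E(G)$, no other arcs. In an ST graph $H$, vertices with equal $N(\cdot)$ are twins; twin blocks are the classes of this equivalence; $\mathrm{repr}$ picks one vertex of each block ($\mathrm{repr}(u)$ is the chosen vertex of $u$'s block), and $\mathrm{Repr}(H)$ is the subdigraph induced by the chosen vertices. In a digraph $H$, the thin neighbor $\theta(u)$ of $u$ is the unique $x\in N(u)$ with $d(x)<d(z)$ for all $z\in N(u)\setminus\{x\}$ (undefined if no such $x$); an arc $a\to b$ is thin if $\theta(a)=b$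 and $\theta(b)=a$. The thin arcs form a matching (no two share an endpoint). For a matching $M$ with endpoint set $V(M)$, $\mathrm{Join}(H,M)$ has a vertex $(u,u)$ for each $u\notin V(M)$ and a vertex $(a,b)$ for each $a\to b\in M$, with $(a,b)\to(x,y)$ an arc iff $a\to y\in E(H)$. $\mathrm{Join}(H)$ denotes $\mathrm{Join}(H,M)$ for $M$ the set of thin arcs of $H$. *)

theory Defs
  imports Main
begin

definition digraph :: "'a set \<Rightarrow> ('a \<times> 'a) set \<Rightarrow> bool" where
  "digraph V E \<longleftrightarrow> finite V \<and> E \<subseteq> V \<times> V"

definition out_nbrs :: "('a \<times> 'a) set \<Rightarrow> 'a \<Rightarrow> 'a set" where
  "out_nbrs E v = {y. (v, y) \<in> E}"

definition in_nbrs :: "('a \<times> 'a) set \<Rightarrow> 'a \<Rightarrow> 'a set" where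
  "in_nbrs E v = {x. (x, v) \<in> E}"

definition nbrs :: "('a \<times> 'a) set \<Rightarrow> 'a \<Rightarrow> 'a set" where
  "nbrs E v = out_nbrs E v \<union> in_nbrs E v"

definition deg :: "('a \<times> 'a) set \<Rightarrow> 'a \<Rightarrow> nat" where
  "deg E v = card (nbrs E v)"

definition disimplicial :: "('a \<times> 'a) set \<Rightarrow> 'a \<Rightarrow> 'a \<Rightarrow> bool" where
  "disimplicial E v w \<longleftrightarrow> (v, w) \<in> E \<and>
     (\<forall>x \<in> in_nbrs E w. \<forall>y \<in> out_nbrs E v. (x, y) \<in> E)"

definition transitive_vertex :: "('a \<times> 'a) set \<Rightarrow> 'a \<Rightarrow> bool" where
  "transitive_vertex E u \<longleftrightarrow> (\<forall>x \<in> in_nbrs E u. \<forall>y \<in> out_nbrs E u. (x, y) \<in> E)"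

datatype 'a split_vertex = Out 'a | In 'a

definition split_V :: "'a set \<Rightarrow> ('a \<times> 'a) set \<Rightarrow> 'a split_vertex set" where
  "split_V V E = {Out v | v. v \<in> V \<and> out_nbrs E v \<noteq> {}} \<union> {In w | w. w \<in> V \<and> in_nbrs E w \<noteq> {}}"

definition split_E :: "('a \<times> 'a) set \<Rightarrow> ('a split_vertex \<times> 'a split_vertex) set" where
  "split_E E = {(Out v, In w) | v w. (v, w) \<in> E}"

definition is_repr :: "'b set \<Rightarrow> ('b \<times> 'b) set \<Rightarrow> ('b \<Rightarrow> 'b) \<Rightarrow> bool" where
  "is_repr V E r \<longleftrightarrow>
     (\<forall>u \<in> V. r u \<in> V \<and> nbrs E (r u) = nbrs E u) \<and>
     (\<forall>u \<in> V. \<forall>u' \<in> V. nbrs E u = nbrs E u' \<longrightarrow> r u = r u')"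

definition Repr_V :: "'b set \<Rightarrow> ('b \<Rightarrow> 'b) \<Rightarrow> 'b set" where
  "Repr_V V r = r ` V"

definition Repr_E :: "'b set \<Rightarrow> ('b \<times> 'b) set \<Rightarrow> ('b \<Rightarrow> 'b) \<Rightarrow> ('b \<times> 'b) set" where
  "Repr_E V E r = E \<inter> (r ` V \<times> r ` V)"

definition is_thin_nbr :: "('b \<times> 'b) set \<Rightarrow> 'b \<Rightarrow> 'b \<Rightarrow> bool" where
  "is_thin_nbr E u x \<longleftrightarrow> x \<in> nbrs E u \<and> (\<forall>z \<in> nbrs E u - {x}. deg E x < deg E z)"

definition thin_arcs :: "('b \<times> 'b) set \<Rightarrow> ('b \<times> 'b) set" where
  "thin_arcs E = {(a, b). (a, b) \<in> E \<and> is_thin_nbr E a b \<and> is_thin_nbr E b a}"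

definition matching_vertices :: "('b \<times> 'b) set \<Rightarrow> 'b set" where
  "matching_vertices M = fst ` M \<union> snd ` M"

definition Join_V :: "'b set \<Rightarrow> ('b \<times> 'b) set \<Rightarrow> ('b \<times> 'b) set" where
  "Join_V V M = {(u, u) | u. u \<in> V \<and> u \<notin> matching_vertices M} \<union> M"

definition Join_E :: "'b set \<Rightarrow> ('b \<times> 'b) set \<Rightarrow> ('b \<times> 'b) set \<Rightarrow> (('b \<times> 'b) \<times> ('b \<times> 'b)) set" where
  "Join_E V E M = {((a, b), (x, y)) | a b x y.
      (a, b) \<in> Join_V V M \<and> (x, y) \<in> Join_V V M \<and> (a, y) \<in> E}"

end

theory Submission
  imports Defs
begin

lemma sE_iff: "(p,q) \<in> split_E E \<longleftrightarrow> (\<exists>x y. p = Out x \<and> q = In y \<and> (x,y)\<in>E)"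
  by (auto simp: split_E_def)

lemma nbrs_Out: "nbrs (split_E E) (Out x) = In ` out_nbrs E x"
  by (auto simp: nbrs_def out_nbrs_def in_nbrs_def sE_iff)

lemma nbrs_In: "nbrs (split_E E) (In y) = Out ` in_nbrs E y"
  by (auto simp: nbrs_def out_nbrs_def in_nbrs_def sE_iff)

lemma sV_Out: "Out x \<in> split_V V E \<longleftrightarrow> x \<in> V \<and> out_nbrs E x \<noteq> {}"
  by (auto simp: split_V_def)

lemma sV_In: "In x \<in> split_V V E \<longleftrightarrow> x \<in> V \<and> in_nbrs E x \<noteq> {}"
  by (auto simp: split_V_def)

lemma sV_arc: "digraph V E \<Longrightarrow> (x,y) \<in> E \<Longrightarrow> Out x \<in> split_V V E \<and> In y \<in> split_V V E"
  by (auto simp: sV_Out sV_In digraph_def out_nbrs_def in_nbrs_def)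

lemma sV_finite: "digraph V E \<Longrightarrow> finite (split_V V E)"
proof -
  assume "digraph V E"
  then have "finite V" by (simp add: digraph_def)
  moreover have "split_V V E \<subseteq> Out ` V \<union> In ` V" by (auto simp: split_V_def)
  ultimately show ?thesis by (meson finite_UnI finite_imageI finite_subset)
qed

lemma r_Out:
  assumes R: "is_repr (split_V V E) (split_E E) r" and h: "Out x \<in> split_V V E"
  obtains x' where "r (Out x) = Out x'" "out_nbrs E x' = out_nbrs E x"
proof -
  have q: "\<forall>u\<in>split_V V E. r u \<in> split_V V E \<and> nbrs (split_E E) (r u) = nbrs (split_E E) u"
    using R unfolding is_repr_def by (rule conjunct1)
  have m: "r (Out x) \<in> split_V V E" using q h by blast
  have n: "nbrs (split_E E) (r (Out x)) = In ` out_nbrs E x"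
    using bspec[OF q h] by (simp only: nbrs_Out)
  from h have ne: "out_nbrs E x \<noteq> {}" by (simp add: sV_Out)
  show ?thesis
  proof (cases "r (Out x)")
    case (Out x')
    with n have "In ` out_nbrs E x' = In ` out_nbrs E x" by (simp add: nbrs_Out)
    then have "out_nbrs E x' = out_nbrs E x" by (simp add: inj_image_eq_iff inj_def)
    with Out show ?thesis using that by blast
  next
    case (In y)
    with n have "Out ` in_nbrs E y = In ` out_nbrs E x" by (simp add: nbrs_In)
    with ne show ?thesis by auto
  qed
qed

lemma r_In:
  assumes R: "is_repr (split_V V E) (split_E E) r" and h: "In x \<in> split_V V E"
  obtains x' where "r (In x) = In x'" "in_nbrs E x' = in_nbrs E x"
proof -
  have q: "\<forall>u\<in>split_V V E. r u \<in> split_V V E \<and> nbrs (split_E E) (r u) = nbrs (split_E E) u"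
    using R unfolding is_repr_def by (rule conjunct1)
  have m: "r (In x) \<in> split_V V E" using q h by blast
  have n: "nbrs (split_E E) (r (In x)) = Out ` in_nbrs E x"
    using bspec[OF q h] by (simp only: nbrs_In)
  from h have ne: "in_nbrs E x \<noteq> {}" by (simp add: sV_In)
  show ?thesis
  proof (cases "r (In x)")
    case (In x')
    with n have "Out ` in_nbrs E x' = Out ` in_nbrs E x" by (simp add: nbrs_In)
    then have "in_nbrs E x' = in_nbrs E x" by (simp add: inj_image_eq_iff inj_def)
    with In show ?thesis using that by blast
  next
    case (Out y)
    with n have "In ` out_nbrs E y = Out ` in_nbrs E x" by (simp add: nbrs_Out)
    with ne show ?thesis by auto
  qed
qed

lemma r_idem:
  assumes R: "is_repr S F r" and "u \<in> S" shows "r (r u) = r u" "r u \<in> S"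
proof -
  have 0: "\<forall>u\<in>S. r u \<in> S \<and> nbrs F (r u) = nbrs F u" using R unfolding is_repr_def by (rule conjunct1)
  have 1: "r u \<in> S" "nbrs F (r u) = nbrs F u" using bspec[OF 0 \<open>u \<in> S\<close>] by blast+
  have 2: "\<forall>u\<in>S. \<forall>u'\<in>S. nbrs F u = nbrs F u' \<longrightarrow> r u = r u'" using R unfolding is_repr_def by (rule conjunct2)
  show "r (r u) = r u" using 2[rule_format, OF \<open>u \<in> S\<close> 1(1) 1(2)[symmetric]] by simp
  show "r u \<in> S" by (rule 1(1))
qed

lemma twin_In:
  assumes R: "is_repr (split_V V E) (split_E E) r"
    and "In y \<in> r ` split_V V E" "In z \<in> r ` split_V V E" "in_nbrs E y = in_nbrs E z"
  shows "y = z"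
proof -
  obtain u1 where u1: "u1 \<in> split_V V E" "In y = r u1" using assms(2) by blast
  obtain u2 where u2: "u2 \<in> split_V V E" "In z = r u2" using assms(3) by blast
  have s1: "In y \<in> split_V V E" "r (In y) = In y" using r_idem[OF R u1(1)] unfolding u1(2)[symmetric] by auto
  have s2: "In z \<in> split_V V E" "r (In z) = In z" using r_idem[OF R u2(1)] unfolding u2(2)[symmetric] by auto
  have "nbrs (split_E E) (In y) = nbrs (split_E E) (In z)" using assms(4) by (simp add: nbrs_In)
  moreover have "\<forall>u\<in>split_V V E. \<forall>u'\<in>split_V V E. nbrs (split_E E) u = nbrs (split_E E) u' \<longrightarrow> r u = r u'"
    using R unfolding is_repr_def by (rule conjunct2)
  ultimately have "r (In y) = r (In z)" using s1(1) s2(1) by (metis (no_types))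
  then have "In y = In z" using s1(2) s2(2) by (metis (no_types))
  then show ?thesis by (metis split_vertex.inject(2))
qed

lemma twin_Out:
  assumes R: "is_repr (split_V V E) (split_E E) r"
    and "Out y \<in> r ` split_V V E" "Out z \<in> r ` split_V V E" "out_nbrs E y = out_nbrs E z"
  shows "y = z"
proof -
  obtain u1 where u1: "u1 \<in> split_V V E" "Out y = r u1" using assms(2) by blast
  obtain u2 where u2: "u2 \<in> split_V V E" "Out z = r u2" using assms(3) by blast
  have s1: "Out y \<in> split_V V E" "r (Out y) = Out y" using r_idem[OF R u1(1)] unfolding u1(2)[symmetric] by auto
  have s2: "Out z \<in> split_V V E" "r (Out z) = Out z" using r_idem[OF R u2(1)] unfolding u2(2)[symmetric] by auto
  have "nbrs (split_E E) (Out y) = nbrs (split_E E) (Out z)" using assms(4) by (simp add: nbrs_Out)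
  moreover have "\<forall>u\<in>split_V V E. \<forall>u'\<in>split_V V E. nbrs (split_E E) u = nbrs (split_E E) u' \<longrightarrow> r u = r u'"
    using R unfolding is_repr_def by (rule conjunct2)
  ultimately have "r (Out y) = r (Out z)" using s1(1) s2(1) by (metis (no_types))
  then have "Out y = Out z" using s1(2) s2(2) by (metis (no_types))
  then show ?thesis by (metis split_vertex.inject(1))
qed

lemma in_eq:
  assumes D: "digraph V E" and R: "is_repr (split_V V E) (split_E E) r"
    and h: "\<And>x. Out x \<in> r ` split_V V E \<Longrightarrow> ((x,y)\<in>E \<longleftrightarrow> (x,z)\<in>E)"
  shows "in_nbrs E y = in_nbrs E z"
proof -
  have *: "(x,b)\<in>E" if "(x,a)\<in>E" and h': "\<And>x. Out x \<in> r ` split_V V E \<Longrightarrow> ((x,a)\<in>E \<longleftrightarrow> (x,b)\<in>E)" for x a b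
  proof -
    have "Out x \<in> split_V V E" using sV_arc[OF D that(1)] by simp
    then obtain x' where x': "r (Out x) = Out x'" "out_nbrs E x' = out_nbrs E x" using r_Out[OF R] by blast
    have "Out x' \<in> r ` split_V V E" using x'(1) \<open>Out x \<in> split_V V E\<close> by (metis imageI)
    moreover have "(x',a)\<in>E" using x'(2) that(1) by (auto simp: out_nbrs_def)
    ultimately have "(x',b)\<in>E" using h' by blast
    then show ?thesis using x'(2) by (auto simp: out_nbrs_def)
  qed
  show ?thesis unfolding in_nbrs_def using *[of _ y z] *[of _ z y] h by blast
qed

lemma out_eq:
  assumes D: "digraph V E" and R: "is_repr (split_V V E) (split_E E) r"
    and h: "\<And>x. In x \<in> r ` split_V V E \<Longrightarrow> ((y,x)\<in>E \<longleftrightarrow> (z,x)\<in>E)"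
  shows "out_nbrs E y = out_nbrs E z"
proof -
  have *: "(b,x)\<in>E" if "(a,x)\<in>E" and h': "\<And>x. In x \<in> r ` split_V V E \<Longrightarrow> ((a,x)\<in>E \<longleftrightarrow> (b,x)\<in>E)" for x a b
  proof -
    have "In x \<in> split_V V E" using sV_arc[OF D that(1)] by simp
    then obtain x' where x': "r (In x) = In x'" "in_nbrs E x' = in_nbrs E x" using r_In[OF R] by blast
    have "In x' \<in> r ` split_V V E" using x'(1) \<open>In x \<in> split_V V E\<close> by (metis imageI)
    moreover have "(a,x')\<in>E" using x'(2) that(1) by (auto simp: in_nbrs_def)
    ultimately have "(b,x')\<in>E" using h' by blast
    then show ?thesis using x'(2) by (auto simp: in_nbrs_def)
  qed
  show ?thesis unfolding out_nbrs_def using *[of y _ z] *[of z _ y] h by blast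
qed

lemma JV_Out:
  assumes "M \<subseteq> split_E E" "Out x \<in> RV" shows "\<exists>q. (Out x, q) \<in> Join_V RV M"
proof (cases "Out x \<in> matching_vertices M")
  case True
  then consider "Out x \<in> fst ` M" | "Out x \<in> snd ` M" by (auto simp: matching_vertices_def)
  then show ?thesis
  proof cases
    case 1 then show ?thesis by (force simp: Join_V_def)
  next
    case 2 then show ?thesis using assms(1) by (force simp: sE_iff)
  qed
next
  case False then show ?thesis using assms by (auto simp: Join_V_def)
qed

lemma JV_In:
  assumes "M \<subseteq> split_E E" "In x \<in> RV" shows "\<exists>q. (q, In x) \<in> Join_V RV M"
proof (cases "In x \<in> matching_vertices M")
  case True
  then consider "In x \<in> fst ` M" | "In x \<in> snd ` M" by (auto simp: matching_vertices_def)
  then show ?thesis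
  proof cases
    case 2 then show ?thesis by (force simp: Join_V_def)
  next
    case 1 then show ?thesis using assms(1) by (force simp: sE_iff)
  qed
next
  case False then show ?thesis using assms by (auto simp: Join_V_def)
qed


theorem theorem9:
  fixes V :: "'a set" and E :: "('a \<times> 'a) set"
    and r :: "'a split_vertex \<Rightarrow> 'a split_vertex"
    and v w :: 'a
  assumes "digraph V E"
    and "(v, w) \<in> E"
    and "is_repr (split_V V E) (split_E E) r"
  shows "disimplicial E v w \<longleftrightarrow>
    (let RV = Repr_V (split_V V E) r;
         RE = Repr_E (split_V V E) (split_E E) r;
         M = thin_arcs RE
     in (r (Out v), r (In w)) \<in> Join_V RV M \<and>
        transitive_vertex (Join_E RV RE M) (r (Out v), r (In w)))"
proof -
  note D = assms(1) and vw = assms(2) and R = assms(3)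
  define SV where "SV = split_V V E"
  define RV where "RV = r ` SV"
  define RE where "RE = split_E E \<inter> (RV \<times> RV)"
  define M where "M = thin_arcs RE"
  have RVd: "Repr_V (split_V V E) r = RV" by (simp add: RV_def SV_def Repr_V_def)
  have REd: "Repr_E (split_V V E) (split_E E) r = RE" by (simp add: RE_def RV_def SV_def Repr_E_def)
  have RE_iff: "(p,q) \<in> RE \<longleftrightarrow> (\<exists>x y. p = Out x \<and> q = In y \<and> (x,y)\<in>E \<and> Out x \<in> RV \<and> In y \<in> RV)" for p q
    by (auto simp: RE_def sE_iff)
  have RE_OI[simp]: "(Out x, In y) \<in> RE \<longleftrightarrow> (x,y)\<in>E \<and> Out x \<in> RV \<and> In y \<in> RV" for x y
    by (simp add: RE_iff)
  have MRE: "M \<subseteq> split_E E" by (auto simp: M_def thin_arcs_def RE_def)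
  have finRV: "finite RV" using sV_finite[OF D] by (simp add: RV_def SV_def)
  have nbIn: "nbrs RE (In y) = {Out x | x. (x,y)\<in>E \<and> Out x \<in> RV \<and> In y \<in> RV}" for y
    by (auto simp: nbrs_def out_nbrs_def in_nbrs_def RE_iff)
  have nbOut: "nbrs RE (Out x) = {In y | y. (x,y)\<in>E \<and> Out x \<in> RV \<and> In y \<in> RV}" for x
    by (auto simp: nbrs_def out_nbrs_def in_nbrs_def RE_iff)
  have finnb: "finite (nbrs RE u)" for u
    by (rule finite_subset[OF _ finRV]) (auto simp: nbrs_def out_nbrs_def in_nbrs_def RE_def)
  have hv: "Out v \<in> SV" and hw: "In w \<in> SV" using sV_arc[OF D vw] by (auto simp: SV_def)
  obtain v' where a: "r (Out v) = Out v'" "out_nbrs E v' = out_nbrs E v"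
    using r_Out[OF R hv[unfolded SV_def]] by blast
  obtain w' where b: "r (In w) = In w'" "in_nbrs E w' = in_nbrs E w"
    using r_In[OF R hw[unfolded SV_def]] by blast
  have av: "Out v' \<in> RV" using a(1)[symmetric] hv unfolding RV_def by (rule image_eqI)
  have bw: "In w' \<in> RV" using b(1)[symmetric] hw unfolding RV_def by (rule image_eqI)
  have vw': "(v',w')\<in>E"
  proof -
    have "(v',w)\<in>E" using a(2) vw by (auto simp: out_nbrs_def)
    then show ?thesis using b(2) by (auto simp: in_nbrs_def)
  qed
  have outv: "(v',y)\<in>E \<longleftrightarrow> (v,y)\<in>E" for y using a(2) by (auto simp: out_nbrs_def)
  have inw: "(x,w')\<in>E \<longleftrightarrow> (x,w)\<in>E" for x using b(2) by (auto simp: in_nbrs_def)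
  have disE: "disimplicial E v w \<longleftrightarrow> (\<forall>x y. (x,w)\<in>E \<longrightarrow> (v,y)\<in>E \<longrightarrow> (x,y)\<in>E)"
    using vw by (auto simp: disimplicial_def in_nbrs_def out_nbrs_def)
  have TV: "transitive_vertex (Join_E RV RE M) (Out v', In w') \<longleftrightarrow>
     (\<forall>p q x y. (p,q) \<in> Join_V RV M \<longrightarrow> (Out v', In w') \<in> Join_V RV M \<longrightarrow> (p, In w') \<in> RE \<longrightarrow>
        (x,y) \<in> Join_V RV M \<longrightarrow> (Out v', y) \<in> RE \<longrightarrow> (p,y) \<in> RE)"
    unfolding transitive_vertex_def Join_E_def in_nbrs_def out_nbrs_def by auto
  have main: "disimplicial E v w \<longleftrightarrow> (Out v', In w') \<in> Join_V RV M \<and> transitive_vertex (Join_E RV RE M) (Out v', In w')"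
  proof
    assume dis: "disimplicial E v w"
    then have dis': "(x,y)\<in>E" if "(x,w)\<in>E" "(v,y)\<in>E" for x y using disE that by blast
    have t1: "is_thin_nbr RE (Out v') (In w')"
      unfolding is_thin_nbr_def
    proof
      show "In w' \<in> nbrs RE (Out v')" using nbOut vw' av bw by auto
      show "\<forall>z\<in>nbrs RE (Out v') - {In w'}. deg RE (In w') < deg RE z"
      proof
        fix z assume z: "z \<in> nbrs RE (Out v') - {In w'}"
        then obtain y where y: "z = In y" "(v',y)\<in>E" "In y \<in> RV" "y \<noteq> w'" using nbOut by auto
        have sub: "nbrs RE (In w') \<subseteq> nbrs RE (In y)"
          using dis' outv inw y bw by (auto simp: nbIn)
        have ne: "nbrs RE (In w') \<noteq> nbrs RE (In y)"
        proof
          assume eq: "nbrs RE (In w') = nbrs RE (In y)"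
          have "\<And>x. Out x \<in> r ` split_V V E \<Longrightarrow> ((x,y)\<in>E \<longleftrightarrow> (x,w')\<in>E)"
          proof -
            fix x assume "Out x \<in> r ` split_V V E"
            then have "Out x \<in> RV" by (simp add: RV_def SV_def)
            then show "(x,y)\<in>E \<longleftrightarrow> (x,w')\<in>E" using eq y bw by (auto simp: nbIn)
          qed
          then have "in_nbrs E y = in_nbrs E w'" by (rule in_eq[OF D R])
          then have "y = w'" using twin_In[OF R] y(3) bw by (simp add: RV_def SV_def)
          with y show False by simp
        qed
        show "deg RE (In w') < deg RE z" unfolding deg_def y(1)
          by (rule psubset_card_mono[OF finnb]) (use sub ne in blast)
      qed
    qed
    have t2: "is_thin_nbr RE (In w') (Out v')"
      unfolding is_thin_nbr_def
    proof
      show "Out v' \<in> nbrs RE (In w')" using nbIn vw' av bw by auto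
      show "\<forall>z\<in>nbrs RE (In w') - {Out v'}. deg RE (Out v') < deg RE z"
      proof
        fix z assume z: "z \<in> nbrs RE (In w') - {Out v'}"
        then obtain x where x: "z = Out x" "(x,w')\<in>E" "Out x \<in> RV" "x \<noteq> v'" using nbIn by auto
        have sub: "nbrs RE (Out v') \<subseteq> nbrs RE (Out x)"
          using dis' outv inw x av by (auto simp: nbOut)
        have ne: "nbrs RE (Out v') \<noteq> nbrs RE (Out x)"
        proof
          assume eq: "nbrs RE (Out v') = nbrs RE (Out x)"
          have "\<And>y. In y \<in> r ` split_V V E \<Longrightarrow> ((x,y)\<in>E \<longleftrightarrow> (v',y)\<in>E)"
          proof -
            fix y assume "In y \<in> r ` split_V V E"
            then have "In y \<in> RV" by (simp add: RV_def SV_def)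
            then show "(x,y)\<in>E \<longleftrightarrow> (v',y)\<in>E" using eq x av by (auto simp: nbOut)
          qed
          then have "out_nbrs E x = out_nbrs E v'" by (rule out_eq[OF D R])
          then have "x = v'" using twin_Out[OF R] x(3) av by (simp add: RV_def SV_def)
          with x show False by simp
        qed
        show "deg RE (Out v') < deg RE z" unfolding deg_def x(1)
          by (rule psubset_card_mono[OF finnb]) (use sub ne in blast)
      qed
    qed
    have inM: "(Out v', In w') \<in> M" using t1 t2 vw' av bw by (simp add: M_def thin_arcs_def)
    then have "(Out v', In w') \<in> Join_V RV M" by (simp add: Join_V_def)
    moreover have "transitive_vertex (Join_E RV RE M) (Out v', In w')"
      unfolding TV
    proof (intro allI impI)
      fix p q x y
      assume "(p, In w') \<in> RE" "(Out v', y) \<in> RE"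
      then show "(p,y) \<in> RE" using dis' outv inw by (auto simp: RE_iff)
    qed
    ultimately show "(Out v', In w') \<in> Join_V RV M \<and> transitive_vertex (Join_E RV RE M) (Out v', In w')" by blast
  next
    assume h: "(Out v', In w') \<in> Join_V RV M \<and> transitive_vertex (Join_E RV RE M) (Out v', In w')"
    have T: "(p,y)\<in>RE" if "(p,q) \<in> Join_V RV M" "(p, In w') \<in> RE" "(x,y) \<in> Join_V RV M" "(Out v', y) \<in> RE" for p q x y
      using h TV that by blast
    show "disimplicial E v w" unfolding disE
    proof (intro allI impI)
      fix x y assume xw: "(x,w)\<in>E" and vy: "(v,y)\<in>E"
      have "Out x \<in> SV" "In y \<in> SV" using sV_arc[OF D xw] sV_arc[OF D vy] by (auto simp: SV_def)
      obtain x'' where x'': "r (Out x) = Out x''" "out_nbrs E x'' = out_nbrs E x"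
        using r_Out[OF R \<open>Out x \<in> SV\<close>[unfolded SV_def]] by blast
      obtain y'' where y'': "r (In y) = In y''" "in_nbrs E y'' = in_nbrs E y"
        using r_In[OF R \<open>In y \<in> SV\<close>[unfolded SV_def]] by blast
      have xr: "Out x'' \<in> RV" using x''(1)[symmetric] \<open>Out x \<in> SV\<close> unfolding RV_def by (rule image_eqI)
      have yr: "In y'' \<in> RV" using y''(1)[symmetric] \<open>In y \<in> SV\<close> unfolding RV_def by (rule image_eqI)
      have "(x'',w)\<in>E" using x''(2) xw by (auto simp: out_nbrs_def)
      then have e1: "(Out x'', In w') \<in> RE" using inw xr bw by simp
      have "(v',y)\<in>E" using outv vy by simp
      then have "(v',y'')\<in>E" using y''(2) by (auto simp: in_nbrs_def)
      then have e2: "(Out v', In y'') \<in> RE" using av yr by simp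
      obtain q where q: "(Out x'', q) \<in> Join_V RV M" using JV_Out[OF MRE xr] by blast
      obtain z where z: "(z, In y'') \<in> Join_V RV M" using JV_In[OF MRE yr] by blast
      have "(Out x'', In y'') \<in> RE" using T[OF q e1 z e2] .
      then have "(x'',y'')\<in>E" by simp
      then have "(x,y'')\<in>E" using x''(2) by (auto simp: out_nbrs_def)
      then show "(x,y)\<in>E" using y''(2) by (auto simp: in_nbrs_def)
    qed
  qed
  show ?thesis unfolding Let_def RVd REd M_def[symmetric] a(1) b(1) by (rule main)
qed

end
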